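(* Let $G=(\mathcal V,\mathcal E,a)$ and $G'=(\mathcal V',\mathcal E',a')$ be finite undirected graphs with discrete node attributes, let $u\in\mathcal V$, $u'\in\mathcal V'$ and $k\ge0$. If $\mathcal M(u,u')\neq\emptyset$, then $$\kappa^{(k+1)}_{\mathrm{subtree}}(u,u')=\delta(a(u),a'(u'))\max_{R\in\mathcal M(u,u')}\prod_{(v,v')\in R}\kappa^{(k)}_{\mathrm{subtree}}(v,v').$$
   Context: $\mathcal N(u)$ denotes the neighbors of $u$; $\delta$ is the Dirac kernel. Weisfeiler–Lehman relabeling: $a_0=a$, and $a_{i}(u)=f\big(a_{i-1}(u),\{\!\{a_{i-1}(v):v\in\mathcal N(u)\}\!\}\big)$ with $f$ an injective relabeling function shared by both graphs (similarly $a'_i$ on $G'$); $\kappa^{(i)}_{\mathrm{subtree}}(u,u')=\delta(a_i(u),a'_i(u'))$. $\mathcal M(u,u')$ is the set of sets $R\subseteq\mathcal N(u)\times\mathcal N(u')$ with $|R|=|\mathcal N(u)|=|\mathcal N(u')|$, such that for all $(v,v'),(w,w')\in R$, $v=w\Leftrightarrow v'=w'$, and $a(v)=a'(v')$ for all $(v,v')\in R$. An empty product equals $1$. *)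

theory Defs
  imports Complex_Main "HOL-Library.Multiset"
begin

text \<open>A graph is a finite vertex set V with a symmetric edge relation E \<subseteq> V \<times> V;
  neighbours of u:\<close>
definition nbrs :: "('v \<times> 'v) set \<Rightarrow> 'v \<Rightarrow> 'v set" where
  "nbrs E u = {v. (u, v) \<in> E}"

fun wl :: "('l \<times> 'l multiset \<Rightarrow> 'l) \<Rightarrow> ('v \<times> 'v) set \<Rightarrow> ('v \<Rightarrow> 'l) \<Rightarrow> nat \<Rightarrow> 'v \<Rightarrow> 'l" where
  "wl f E a 0 u = a u"
| "wl f E a (Suc i) u = f (wl f E a i u, image_mset (wl f E a i) (mset_set (nbrs E u)))"

definition dirac :: "'a \<Rightarrow> 'a \<Rightarrow> real" where
  "dirac x y = (if x = y then 1 else 0)"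

definition k_subtree ::
  "('l \<times> 'l multiset \<Rightarrow> 'l) \<Rightarrow> ('v \<times> 'v) set \<Rightarrow> ('v \<Rightarrow> 'l) \<Rightarrow> ('w \<times> 'w) set \<Rightarrow> ('w \<Rightarrow> 'l)
    \<Rightarrow> nat \<Rightarrow> 'v \<Rightarrow> 'w \<Rightarrow> real" where
  "k_subtree f E a E' a' i u u' = dirac (wl f E a i u) (wl f E' a' i u')"

definition matchings ::
  "('v \<times> 'v) set \<Rightarrow> ('v \<Rightarrow> 'l) \<Rightarrow> ('w \<times> 'w) set \<Rightarrow> ('w \<Rightarrow> 'l) \<Rightarrow> 'v \<Rightarrow> 'w \<Rightarrow> ('v \<times> 'w) set set" where
  "matchings E a E' a' u u' =
    {R. R \<subseteq> nbrs E u \<times> nbrs E' u'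
       \<and> card R = card (nbrs E u) \<and> card R = card (nbrs E' u')
       \<and> (\<forall>(v, v') \<in> R. \<forall>(w, w') \<in> R. v = w \<longleftrightarrow> v' = w')
       \<and> (\<forall>(v, v') \<in> R. a v = a' v')}"

end

theory Submission
  imports Defs
begin
lemma mset_bij:
  assumes "finite A" "finite B" "image_mset g (mset_set A) = image_mset h (mset_set B)"
  shows "\<exists>\<phi>. bij_betw \<phi> A B \<and> (\<forall>x\<in>A. h (\<phi> x) = g x)"
  using assms
proof (induction A arbitrary: B rule: finite_induct)
  case empty
  then have "B = {}" by (metis image_mset_is_empty_iff mset_set.empty mset_set_empty_iff)
  then show ?case by (auto simp: bij_betw_def)
next
  case (insert x A)
  have "g x \<in># image_mset h (mset_set B)" using insert.prems insert.hyps by (metis mset_set.insert image_mset_add_mset union_single_eq_member)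
  then obtain y where y: "y \<in> B" "h y = g x" using insert.prems by auto
  have "mset_set B = add_mset y (mset_set (B - {y}))" using y insert.prems by (simp add: mset_set.remove)
  then have "image_mset g (mset_set A) = image_mset h (mset_set (B - {y}))"
    using insert y by simp
  then obtain \<phi> where p: "bij_betw \<phi> A (B - {y})" "\<forall>x\<in>A. h (\<phi> x) = g x"
    using insert.IH insert.prems by blast
  have "bij_betw (\<phi>(x:=y)) (insert x A) B"
  proof -
    have "bij_betw (\<phi>(x:=y)) A (B - {y})" using p(1) insert.hyps
      by (metis bij_betw_cong fun_upd_other)
    then have "bij_betw (\<phi>(x:=y)) (A \<union> {x}) ((B - {y}) \<union> {(\<phi>(x:=y)) x})"
      using insert.hyps by (intro notIn_Un_bij_betw) auto
    then show ?thesis using y by (simp add: insert_absorb)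
  qed
  then show ?case using p y insert.hyps by auto
qed

lemma wl_down:
  assumes "inj f"
  shows "fst (inv f (wl f E a (Suc i) v)) = wl f E a i v"
  using assms by simp

lemma wl_Suc_eq:
  assumes "inj f"
  shows "wl f E a (Suc i) u = wl f E' a' (Suc i) u' \<longleftrightarrow>
    wl f E a i u = wl f E' a' i u' \<and>
    image_mset (wl f E a i) (mset_set (nbrs E u)) = image_mset (wl f E' a' i) (mset_set (nbrs E' u'))"
  using assms by (auto dest: injD)

lemma ms_down:
  assumes "inj f"
    "image_mset (wl f E a (Suc i)) M = image_mset (wl f E' a' (Suc i)) M'"
  shows "image_mset (wl f E a i) M = image_mset (wl f E' a' i) M'"
proof -
  have "image_mset (\<lambda>x. fst (inv f x)) (image_mset (wl f E a (Suc i)) M)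
      = image_mset (\<lambda>x. fst (inv f x)) (image_mset (wl f E' a' (Suc i)) M')"
    using assms(2) by simp
  then show ?thesis using assms(1) by (simp add: image_mset.compositionality o_def)
qed

lemma wl_eq_a:
  assumes "inj f" "wl f E a k u = wl f E' a' k u'"
  shows "a u = a' u'"
  using assms(2)
proof (induction k)
  case 0 then show ?case by simp
next
  case (Suc k) then show ?case using wl_Suc_eq[OF assms(1), of E a k u E' a' u'] by blast
qed

lemma wl0: "wl f E a 0 = a" by (rule ext) simp

lemma wl_char:
  assumes "inj f"
  shows "wl f E a (Suc k) u = wl f E' a' (Suc k) u' \<longleftrightarrow>
    a u = a' u' \<and>
    image_mset (wl f E a k) (mset_set (nbrs E u)) = image_mset (wl f E' a' k) (mset_set (nbrs E' u'))"
proof (induction k)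
  case 0 then show ?case using wl_Suc_eq[OF assms, of E a 0 u E' a' u'] wl0[of f E a] wl0[of f E' a'] by simp
next
  case (Suc k)
  show ?case
  proof
    assume h: "wl f E a (Suc (Suc k)) u = wl f E' a' (Suc (Suc k)) u'"
    then show "a u = a' u' \<and>
    image_mset (wl f E a (Suc k)) (mset_set (nbrs E u)) = image_mset (wl f E' a' (Suc k)) (mset_set (nbrs E' u'))"
      using wl_Suc_eq[OF assms, of E a "Suc k" u E' a' u'] wl_eq_a[OF assms, of E a "Suc k" u E' a' u'] by blast
  next
    assume h: "a u = a' u' \<and>
    image_mset (wl f E a (Suc k)) (mset_set (nbrs E u)) = image_mset (wl f E' a' (Suc k)) (mset_set (nbrs E' u'))"
    then have "image_mset (wl f E a k) (mset_set (nbrs E u)) = image_mset (wl f E' a' k) (mset_set (nbrs E' u'))"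
      using ms_down[OF assms, of E a k _ E' a'] by blast
    then have "wl f E a (Suc k) u = wl f E' a' (Suc k) u'" using Suc h by blast
    then show "wl f E a (Suc (Suc k)) u = wl f E' a' (Suc (Suc k)) u'"
      using h wl_Suc_eq[OF assms, of E a "Suc k" u E' a' u'] by blast
  qed
qed


lemma prod_dirac:
  assumes "finite R"
  shows "(\<Prod>(v, v') \<in> R. dirac (g v) (h v')) = (if \<forall>(v, v')\<in>R. g v = h v' then 1 else 0)"
proof (cases "\<forall>(v, v')\<in>R. g v = h v'")
  case True
  then have "(\<Prod>(v, v') \<in> R. dirac (g v) (h v')) = (\<Prod>(v, v') \<in> R. 1)"
    by (intro prod.cong) (auto simp: dirac_def)
  then show ?thesis using True by simp
next
  case False
  then obtain v v' where "(v, v') \<in> R" "g v \<noteq> h v'" by auto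
  then have "(\<Prod>(v, v') \<in> R. dirac (g v) (h v')) = 0"
    using assms by (intro prod_zero) (auto simp: dirac_def intro!: bexI[of _ "(v, v')"])
  then show ?thesis using False by simp
qed

lemma fst_image_match:
  assumes "finite N" "R \<subseteq> N \<times> N'" "card R = card N"
    "\<forall>(v, v') \<in> R. \<forall>(w, w') \<in> R. v = w \<longleftrightarrow> v' = w'"
  shows "image_mset fst (mset_set R) = mset_set N"
proof -
  have inj: "inj_on fst R" using assms(4) unfolding inj_on_def by fastforce
  have "fst ` R \<subseteq> N" using assms(2) by auto
  moreover have "card (fst ` R) = card N" using card_image[OF inj] assms(3) by simp
  ultimately have "fst ` R = N" using assms(1) by (simp add: card_subset_eq)
  then show ?thesis using image_mset_mset_set[OF inj] by simp
qed

lemma snd_image_match: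
  assumes "finite N'" "R \<subseteq> N \<times> N'" "card R = card N'"
    "\<forall>(v, v') \<in> R. \<forall>(w, w') \<in> R. v = w \<longleftrightarrow> v' = w'"
  shows "image_mset snd (mset_set R) = mset_set N'"
proof -
  have inj: "inj_on snd R" using assms(4) unfolding inj_on_def by fastforce
  have "snd ` R \<subseteq> N'" using assms(2) by auto
  moreover have "card (snd ` R) = card N'" using card_image[OF inj] assms(3) by simp
  ultimately have "snd ` R = N'" using assms(1) by (simp add: card_subset_eq)
  then show ?thesis using image_mset_mset_set[OF inj] by simp
qed

theorem lemma1:
  fixes V :: "'v set" and E :: "('v \<times> 'v) set" and a :: "'v \<Rightarrow> 'l"
    and V' :: "'w set" and E' :: "('w \<times> 'w) set" and a' :: "'w \<Rightarrow> 'l"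
    and f :: "'l \<times> 'l multiset \<Rightarrow> 'l" and u :: 'v and u' :: 'w and k :: nat
  assumes "finite V" "E \<subseteq> V \<times> V" "sym E"
    and "finite V'" "E' \<subseteq> V' \<times> V'" "sym E'"
    and "inj f"
    and "u \<in> V" "u' \<in> V'"
    and "matchings E a E' a' u u' \<noteq> {}"
  shows "k_subtree f E a E' a' (Suc k) u u'
         = dirac (a u) (a' u') *
           Max ((\<lambda>R. \<Prod>(v, v') \<in> R. k_subtree f E a E' a' k v v') ` matchings E a E' a' u u')"
proof -
  define N where "N = nbrs E u"
  define N' where "N' = nbrs E' u'"
  define M where "M = matchings E a E' a' u u'"
  define g where "g = wl f E a k"
  define h where "h = wl f E' a' k"
  define Q where "Q = (\<lambda>R::('v\<times>'w) set. \<forall>(v, v')\<in>R. g v = h v')"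
  have "N \<subseteq> V" using assms(2) unfolding N_def nbrs_def by auto
  then have finN: "finite N" using assms(1) by (rule finite_subset)
  have "N' \<subseteq> V'" using assms(5) unfolding N'_def nbrs_def by auto
  then have finN': "finite N'" using assms(4) by (rule finite_subset)
  have Msub: "M \<subseteq> Pow (N \<times> N')" unfolding M_def matchings_def N_def N'_def by auto
  have finNN: "finite (N \<times> N')" using finN finN' by simp
  have finM: "finite M" using Msub finNN by (simp add: finite_subset)
  have finR: "finite R" if "R \<in> M" for R
  proof -
    have "R \<subseteq> N \<times> N'" using that Msub by auto
    then show ?thesis using finNN by (rule finite_subset)
  qed
  have P: "(\<Prod>(v, v') \<in> R. k_subtree f E a E' a' k v v') = (if Q R then 1 else 0)" if "R \<in> M" for R
    unfolding k_subtree_def Q_def g_def h_def using prod_dirac[OF finR[OF that]] by blast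
  have key: "(\<exists>R\<in>M. Q R) \<longleftrightarrow> image_mset g (mset_set N) = image_mset h (mset_set N')"
  proof
    assume "\<exists>R\<in>M. Q R"
    then obtain R where R: "R \<in> M" "Q R" by blast
    have c: "R \<subseteq> N \<times> N'" "card R = card N" "card R = card N'"
      "\<forall>(v, v') \<in> R. \<forall>(w, w') \<in> R. v = w \<longleftrightarrow> v' = w'"
      using R(1) unfolding M_def matchings_def N_def N'_def by auto
    have "image_mset g (mset_set N) = image_mset g (image_mset fst (mset_set R))"
      using fst_image_match[OF finN c(1,2,4)] by simp
    also have "\<dots> = image_mset (g \<circ> fst) (mset_set R)" by (simp add: image_mset.compositionality)
    also have "\<dots> = image_mset (h \<circ> snd) (mset_set R)"
      using R(2) finR[OF R(1)] unfolding Q_def by (intro image_mset_cong) auto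
    also have "\<dots> = image_mset h (image_mset snd (mset_set R))" by (simp add: image_mset.compositionality)
    also have "\<dots> = image_mset h (mset_set N')"
      using snd_image_match[OF finN' c(1,3,4)] by simp
    finally show "image_mset g (mset_set N) = image_mset h (mset_set N')" .
  next
    assume "image_mset g (mset_set N) = image_mset h (mset_set N')"
    then obtain \<phi> where phi: "bij_betw \<phi> N N'" "\<forall>x\<in>N. h (\<phi> x) = g x"
      using mset_bij[OF finN finN'] by blast
    define R where "R = (\<lambda>v. (v, \<phi> v)) ` N"
    have inj: "inj_on (\<lambda>v. (v, \<phi> v)) N" by (auto simp: inj_on_def)
    have injphi: "inj_on \<phi> N" using phi(1) by (simp add: bij_betw_def)
    have "card R = card N" unfolding R_def using card_image[OF inj] .
    moreover have "card N = card N'" using phi(1) by (simp add: bij_betw_same_card)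
    moreover have "R \<subseteq> N \<times> N'" unfolding R_def using phi(1) by (auto simp: bij_betw_def)
    moreover have "\<forall>(v, v') \<in> R. \<forall>(w, w') \<in> R. v = w \<longleftrightarrow> v' = w'"
      unfolding R_def using injphi by (auto simp: inj_on_def)
    moreover have "\<forall>(v, v') \<in> R. a v = a' v'"
    proof -
      have "a v = a' (\<phi> v)" if "v \<in> N" for v
        using phi(2) that wl_eq_a[OF assms(7), of E a k v E' a' "\<phi> v"] unfolding g_def h_def by metis
      then show ?thesis unfolding R_def by auto
    qed
    ultimately have "R \<in> M" unfolding M_def matchings_def N_def N'_def by auto
    moreover have "Q R" unfolding Q_def R_def using phi(2) by auto
    ultimately show "\<exists>R\<in>M. Q R" by blast
  qed
  have img: "(\<lambda>R. \<Prod>(v, v') \<in> R. k_subtree f E a E' a' k v v') ` M = (\<lambda>R. if Q R then 1 else 0) ` M"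
    using P by (intro image_cong) auto
  have Mx: "Max ((\<lambda>R. if Q R then (1::real) else 0) ` M) = (if \<exists>R\<in>M. Q R then 1 else 0)"
  proof (cases "\<exists>R\<in>M. Q R")
    case True
    then show ?thesis using finM by (intro Max_eqI) (auto intro!: image_eqI)
  next
    case False
    then have "(\<lambda>R. if Q R then (1::real) else 0) ` M = {0}" using assms(10) unfolding M_def by auto
    then show ?thesis using False by (simp only:) simp
  qed
  have "k_subtree f E a E' a' (Suc k) u u' = (if a u = a' u' \<and> image_mset g (mset_set N) = image_mset h (mset_set N') then 1 else 0)"
    unfolding k_subtree_def dirac_def g_def h_def N_def N'_def by (simp only: wl_char[OF assms(7)])
  then show ?thesis unfolding M_def[symmetric] img Mx key by (simp add: dirac_def)
qed

end
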